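(* Let $(\mu,b)$ be a stable configuration under perfect observability for the objective game $G$. Then $\pi(b(\theta))=\pi(b(\theta'))$ for all $\theta,\theta'\in\operatorname{supp}\mu$.
   Context: Objective game: $G=(N,A,\pi)$ is a finite $n$-player normal-form game, $N=\{1,\dots,n\}$, finite action sets $A_i$, $A=\prod_{i\in N}A_i$, material payoff (fitness) functions $\pi_i:A\to\mathbb{R}$, extended multilinearly to mixed profiles in $\prod_{i}\Delta(A_i)$; $\pi=(\pi_1,\dots,\pi_n)$. Preference types: $\Theta=\mathbb{R}^A$ (utility functions on $A$, extended multilinearly to mixed profiles). $\mathcal{M}(\Theta^n)$ is the set of product distributions $\mu=\mu_1\times\dots\times\mu_n$ on $\Theta^n$ with each $\mu_i$ finitely supported; $\operatorname{supp}\mu=\prod_i\operatorname{supp}\mu_i$, $\mu_{-i}(\theta_{-i})=\prod_{j\neq i}\mu_j(\theta_j)$. Mutants: for nonempty $J\subseteq N$, a mutant sub-profile is $\tilde\theta_J\in\prod_{j\in J}(\Theta\setminus\operatorname{supp}\mu_j)$ with shares $\varepsilon=(\varepsilon_j)_{j\in J}\in(0,1)^{|J|}$, $\|\varepsilon\|=\max_j\varepsilon_j$; the post-entry distribution $\tilde\mu^\varepsilon$ has $\tilde\mu^\varepsilon_i=(1-\varepsilon_i)\mu_i+\varepsilon_i\delta_{\tilde\theta_i}$ for $i\in J$ and $\tilde\mu^\varepsilon_i=\mu_i$ otherwise. Perfect observability: for $\mu\in\mathcal M(\Theta^n)$, an equilibrium is a map $b:\operatorname{supp}\mu\to\prod_i\Delta(A_i)$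 such that for each $\theta$, $b(\theta)$ is a Nash equilibrium of the normal-form game with action sets $A_i$ and payoffs $\theta_1,\dots,\theta_n$; $B_1(\mu)$ is the set of these; $(\mu,b)$ with $b\in B_1(\mu)$ is a configuration. Average fitness of $\theta_i\in\operatorname{supp}\mu_i$: $\Pi_{\theta_i}(\mu;b)=\sum_{\theta'_{-i}\in\operatorname{supp}\mu_{-i}}\mu_{-i}(\theta'_{-i})\pi_i(b(\theta_i,\theta'_{-i}))$. $(\mu,b)$ is balanced if for each $i$ all types in $\operatorname{supp}\mu_i$ have equal average fitness. Focal set: $B_1(\tilde\mu^\varepsilon;b)=\{\tilde b\in B_1(\tilde\mu^\varepsilon):\tilde b(\theta)=b(\theta)\ \forall\theta\in\operatorname{supp}\mu\}$. $(\mu,b)$ is stable if it is balanced and for every nonempty $J\subseteq N$ and every mutant sub-profile $\tilde\theta_J$ there is $\bar\epsilon\in(0,1)$ such that for every $\varepsilon\in(0,1)^{|J|}$ with $\|\varepsilon\|<\bar\epsilon$ and every $\tilde b\in B_1(\tilde\mu^\varepsilon;b)$, either (i) there is $j\in J$ with $\Pi_{\theta_j}(\tilde\mu^\varepsilon;\tilde b)>\Pi_{\tilde\theta_j}(\tilde\mu^\varepsilon;\tilde b)$ for all $\theta_j\in\operatorname{supp}\mu_j$, or (ii) for every $i\in N$ all types in $\operatorname{supp}\tilde\mu^\varepsilon_i$ have equal average fitness under $(\tilde\mu^\varepsilon,\tilde b)$. *)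

theory Defs
  imports Complex_Main "HOL-Library.FuncSet"
begin

definition profiles :: "('p \<Rightarrow> 'a set) \<Rightarrow> ('p \<Rightarrow> 'a) set" where
  "profiles Act = PiE UNIV Act"

definition mixed_strategy :: "('p \<Rightarrow> 'a set) \<Rightarrow> 'p \<Rightarrow> ('a \<Rightarrow> real) \<Rightarrow> bool" where
  "mixed_strategy Act i s \<longleftrightarrow>
     (\<forall>a. 0 \<le> s a) \<and> (\<forall>a. a \<notin> Act i \<longrightarrow> s a = 0) \<and> sum s (Act i) = 1"

definition mixed_profile :: "('p \<Rightarrow> 'a set) \<Rightarrow> ('p \<Rightarrow> 'a \<Rightarrow> real) \<Rightarrow> bool" where
  "mixed_profile Act \<sigma> \<longleftrightarrow> (\<forall>i. mixed_strategy Act i (\<sigma> i))"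

definition EU :: "('p::finite \<Rightarrow> 'a set) \<Rightarrow> (('p \<Rightarrow> 'a) \<Rightarrow> real) \<Rightarrow> ('p \<Rightarrow> 'a \<Rightarrow> real) \<Rightarrow> real" where
  "EU Act u \<sigma> = (\<Sum>a\<in>profiles Act. (\<Prod>i\<in>UNIV. \<sigma> i (a i)) * u a)"

definition is_NE :: "('p::finite \<Rightarrow> 'a set) \<Rightarrow> ('p \<Rightarrow> ('p \<Rightarrow> 'a) \<Rightarrow> real) \<Rightarrow> ('p \<Rightarrow> 'a \<Rightarrow> real) \<Rightarrow> bool" where
  "is_NE Act \<theta> \<sigma> \<longleftrightarrow> mixed_profile Act \<sigma> \<and>
     (\<forall>i s. mixed_strategy Act i s \<longrightarrow> EU Act (\<theta> i) (\<sigma>(i := s)) \<le> EU Act (\<theta> i) \<sigma>)"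

text \<open>The type space \<Theta> = R^A: utility functions on A (normalised to 0 outside A,
so that each element of R^A has exactly one representative).\<close>
definition Theta :: "('p \<Rightarrow> 'a set) \<Rightarrow> (('p \<Rightarrow> 'a) \<Rightarrow> real) set" where
  "Theta Act = {u. \<forall>a. a \<notin> profiles Act \<longrightarrow> u a = 0}"

definition supp :: "('t \<Rightarrow> real) \<Rightarrow> 't set" where
  "supp m = {t. m t \<noteq> 0}"

definition type_dist :: "('p \<Rightarrow> 'a set) \<Rightarrow> ('p \<Rightarrow> (('p \<Rightarrow> 'a) \<Rightarrow> real) \<Rightarrow> real) \<Rightarrow> bool" where
  "type_dist Act \<mu> \<longleftrightarrow> (\<forall>i. finite (supp (\<mu> i)) \<and> supp (\<mu> i) \<subseteq> Theta Act \<and>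
     (\<forall>t. 0 \<le> \<mu> i t) \<and> sum (\<mu> i) (supp (\<mu> i)) = 1)"

definition supp_prof :: "('p \<Rightarrow> 't \<Rightarrow> real) \<Rightarrow> ('p \<Rightarrow> 't) set" where
  "supp_prof \<mu> = {\<theta>. \<forall>i. \<theta> i \<in> supp (\<mu> i)}"

definition B1 :: "('p::finite \<Rightarrow> 'a set) \<Rightarrow> ('p \<Rightarrow> (('p \<Rightarrow> 'a) \<Rightarrow> real) \<Rightarrow> real)
    \<Rightarrow> (('p \<Rightarrow> ('p \<Rightarrow> 'a) \<Rightarrow> real) \<Rightarrow> 'p \<Rightarrow> 'a \<Rightarrow> real) set" where
  "B1 Act \<mu> = {b. \<forall>\<theta>\<in>supp_prof \<mu>. is_NE Act \<theta> (b \<theta>)}"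

text \<open>Average fitness of type t of player i: sum over opponents' type profiles
\<theta>'_{-i} in supp \<mu>_{-i}, represented as full profiles \<theta>' with \<theta>' i = t.\<close>
definition avg_fit :: "('p::finite \<Rightarrow> 'a set) \<Rightarrow> ('p \<Rightarrow> ('p \<Rightarrow> 'a) \<Rightarrow> real)
    \<Rightarrow> ('p \<Rightarrow> (('p \<Rightarrow> 'a) \<Rightarrow> real) \<Rightarrow> real)
    \<Rightarrow> (('p \<Rightarrow> ('p \<Rightarrow> 'a) \<Rightarrow> real) \<Rightarrow> 'p \<Rightarrow> 'a \<Rightarrow> real)
    \<Rightarrow> 'p \<Rightarrow> (('p \<Rightarrow> 'a) \<Rightarrow> real) \<Rightarrow> real" where
  "avg_fit Act \<pi> \<mu> b i t =
     (\<Sum>\<theta>'\<in>{\<theta>'. \<theta>' i = t \<and> (\<forall>j. j \<noteq> i \<longrightarrow> \<theta>' j \<in> supp (\<mu> j))}.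
        (\<Prod>j\<in>UNIV - {i}. \<mu> j (\<theta>' j)) * EU Act (\<pi> i) (b \<theta>'))"

definition balanced :: "('p::finite \<Rightarrow> 'a set) \<Rightarrow> ('p \<Rightarrow> ('p \<Rightarrow> 'a) \<Rightarrow> real)
    \<Rightarrow> ('p \<Rightarrow> (('p \<Rightarrow> 'a) \<Rightarrow> real) \<Rightarrow> real)
    \<Rightarrow> (('p \<Rightarrow> ('p \<Rightarrow> 'a) \<Rightarrow> real) \<Rightarrow> 'p \<Rightarrow> 'a \<Rightarrow> real) \<Rightarrow> bool" where
  "balanced Act \<pi> \<mu> b \<longleftrightarrow>
     (\<forall>i. \<forall>t\<in>supp (\<mu> i). \<forall>t'\<in>supp (\<mu> i). avg_fit Act \<pi> \<mu> b i t = avg_fit Act \<pi> \<mu> b i t')"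

definition post_entry :: "('p \<Rightarrow> 't \<Rightarrow> real) \<Rightarrow> 'p set \<Rightarrow> ('p \<Rightarrow> 't) \<Rightarrow> ('p \<Rightarrow> real)
    \<Rightarrow> 'p \<Rightarrow> 't \<Rightarrow> real" where
  "post_entry \<mu> J mt eps = (\<lambda>i t. if i \<in> J
      then (1 - eps i) * \<mu> i t + eps i * (if t = mt i then 1 else 0)
      else \<mu> i t)"

definition B1_focal :: "('p::finite \<Rightarrow> 'a set) \<Rightarrow> ('p \<Rightarrow> (('p \<Rightarrow> 'a) \<Rightarrow> real) \<Rightarrow> real)
    \<Rightarrow> ('p \<Rightarrow> (('p \<Rightarrow> 'a) \<Rightarrow> real) \<Rightarrow> real)
    \<Rightarrow> (('p \<Rightarrow> ('p \<Rightarrow> 'a) \<Rightarrow> real) \<Rightarrow> 'p \<Rightarrow> 'a \<Rightarrow> real)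
    \<Rightarrow> (('p \<Rightarrow> ('p \<Rightarrow> 'a) \<Rightarrow> real) \<Rightarrow> 'p \<Rightarrow> 'a \<Rightarrow> real) set" where
  "B1_focal Act \<mu>' \<mu> b = {b'\<in>B1 Act \<mu>'. \<forall>\<theta>\<in>supp_prof \<mu>. b' \<theta> = b \<theta>}"

definition stable :: "('p::finite \<Rightarrow> 'a set) \<Rightarrow> ('p \<Rightarrow> ('p \<Rightarrow> 'a) \<Rightarrow> real)
    \<Rightarrow> ('p \<Rightarrow> (('p \<Rightarrow> 'a) \<Rightarrow> real) \<Rightarrow> real)
    \<Rightarrow> (('p \<Rightarrow> ('p \<Rightarrow> 'a) \<Rightarrow> real) \<Rightarrow> 'p \<Rightarrow> 'a \<Rightarrow> real) \<Rightarrow> bool" where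
  "stable Act \<pi> \<mu> b \<longleftrightarrow> balanced Act \<pi> \<mu> b \<and>
     (\<forall>J mt. J \<noteq> {} \<longrightarrow> (\<forall>j\<in>J. mt j \<in> Theta Act - supp (\<mu> j)) \<longrightarrow>
       (\<exists>eb. 0 < eb \<and> eb < 1 \<and>
          (\<forall>eps. (\<forall>j\<in>J. 0 < eps j \<and> eps j < 1 \<and> eps j < eb) \<longrightarrow>
             (\<forall>b'\<in>B1_focal Act (post_entry \<mu> J mt eps) \<mu> b.
                (\<exists>j\<in>J. \<forall>t\<in>supp (\<mu> j).
                   avg_fit Act \<pi> (post_entry \<mu> J mt eps) b' j t >
                   avg_fit Act \<pi> (post_entry \<mu> J mt eps) b' j (mt j))
                \<or> balanced Act \<pi> (post_entry \<mu> J mt eps) b'))))"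

end

theory Submission
  imports Defs
begin

definition ind :: "('p \<Rightarrow> 'a set) \<Rightarrow> real \<Rightarrow> ('p \<Rightarrow> 'a) \<Rightarrow> real" where
  "ind Act c = (\<lambda>a. if a \<in> profiles Act then c else 0)"

lemma mixed_sum_one:
  fixes Act :: "'p::finite \<Rightarrow> 'a set"
  assumes fin: "\<forall>i. finite (Act i)" and m: "mixed_profile Act \<sigma>"
  shows "(\<Sum>a\<in>profiles Act. \<Prod>i\<in>UNIV. \<sigma> i (a i)) = 1"
proof -
  have "(\<Sum>a\<in>profiles Act. \<Prod>i\<in>UNIV. \<sigma> i (a i)) = (\<Prod>i\<in>UNIV. \<Sum>x\<in>Act i. \<sigma> i x)"
    unfolding profiles_def using fin by (subst prod_sum_PiE) auto
  also have "\<dots> = 1" using m unfolding mixed_profile_def mixed_strategy_def by simp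
  finally show ?thesis .
qed

lemma EU_ind:
  fixes Act :: "'p::finite \<Rightarrow> 'a set"
  assumes fin: "\<forall>i. finite (Act i)" and m: "mixed_profile Act \<sigma>"
  shows "EU Act (ind Act c) \<sigma> = c"
proof -
  have "EU Act (ind Act c) \<sigma> = (\<Sum>a\<in>profiles Act. (\<Prod>i\<in>UNIV. \<sigma> i (a i)) * c)"
    unfolding EU_def ind_def by (intro sum.cong) auto
  also have "\<dots> = c" using mixed_sum_one[OF fin m] by (simp add: sum_distrib_right[symmetric])
  finally show ?thesis .
qed

lemma NE_ind:
  fixes Act :: "'p::finite \<Rightarrow> 'a set"
  assumes fin: "\<forall>i. finite (Act i)" and ne: "is_NE Act \<theta> \<sigma>"
    and d: "\<forall>k. \<theta>' k \<noteq> \<theta> k \<longrightarrow> (\<exists>c. \<theta>' k = ind Act c)"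
  shows "is_NE Act \<theta>' \<sigma>"
  unfolding is_NE_def
proof (intro conjI allI impI)
  show mp: "mixed_profile Act \<sigma>" using ne unfolding is_NE_def by simp
  fix i s assume s: "mixed_strategy Act i s"
  have mp2: "mixed_profile Act (\<sigma>(i := s))" using mp s unfolding mixed_profile_def by auto
  show "EU Act (\<theta>' i) (\<sigma>(i := s)) \<le> EU Act (\<theta>' i) \<sigma>"
  proof (cases "\<theta>' i = \<theta> i")
    case True thus ?thesis using ne s unfolding is_NE_def by simp
  next
    case False
    then obtain c where "\<theta>' i = ind Act c" using d by blast
    thus ?thesis using EU_ind[OF fin mp] EU_ind[OF fin mp2] by simp
  qed
qed

lemma ind_inj:
  fixes Act :: "'p::finite \<Rightarrow> 'a set"
  assumes "\<forall>i. Act i \<noteq> {}"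
  shows "inj (ind Act)"
proof
  fix c d assume "ind Act c = ind Act d"
  obtain a where "a \<in> profiles Act" using assms unfolding profiles_def
    by (metis PiE_eq_empty_iff all_not_in_conv)
  thus "c = d" using \<open>ind Act c = ind Act d\<close> unfolding ind_def by metis
qed

lemma exists_mutant:
  fixes Act :: "'p::finite \<Rightarrow> 'a set"
  assumes "\<forall>i. Act i \<noteq> {}" and "finite F"
  shows "\<exists>c. ind Act c \<notin> F"
proof -
  have "infinite (range (ind Act))"
    using ind_inj[OF assms(1)] by (simp add: finite_image_iff infinite_UNIV_char_0)
  hence "infinite (range (ind Act) - F)" using assms(2) by (simp add: Diff_infinite_finite)
  then obtain x where "x \<in> range (ind Act) - F" using infinite_imp_nonempty by blast
  thus ?thesis by blast
qed

lemma ind_Theta: "ind Act c \<in> Theta Act"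
  unfolding ind_def Theta_def by auto

definition Sset :: "('p \<Rightarrow> 't \<Rightarrow> real) \<Rightarrow> 'p \<Rightarrow> 't \<Rightarrow> ('p \<Rightarrow> 't) set" where
  "Sset m i t = {\<theta>'. \<theta>' i = t \<and> (\<forall>j. j \<noteq> i \<longrightarrow> \<theta>' j \<in> supp (m j))}"

definition wt :: "('p \<Rightarrow> 't \<Rightarrow> real) \<Rightarrow> 'p \<Rightarrow> ('p \<Rightarrow> 't) \<Rightarrow> real" where
  "wt m i \<theta> = (\<Prod>j\<in>UNIV - {i}. m j (\<theta> j))"

lemma avg_fit_reindex:
  "avg_fit Act \<pi> m b i t' = (\<Sum>\<theta>\<in>Sset m i t. wt m i \<theta> * EU Act (\<pi> i) (b (\<theta>(i := t'))))"
proof -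
  have bij: "bij_betw (\<lambda>\<theta>. \<theta>(i := t')) (Sset m i t) (Sset m i t')"
    by (rule bij_betwI[where g="\<lambda>\<theta>. \<theta>(i := t)"]) (auto simp: Sset_def)
  have "avg_fit Act \<pi> m b i t' = (\<Sum>\<theta>\<in>Sset m i t'. wt m i \<theta> * EU Act (\<pi> i) (b \<theta>))"
    unfolding avg_fit_def Sset_def wt_def by simp
  also have "\<dots> = (\<Sum>\<theta>\<in>Sset m i t. wt m i (\<theta>(i := t')) * EU Act (\<pi> i) (b (\<theta>(i := t'))))"
    using sum.reindex_bij_betw[OF bij, symmetric] by simp
  also have "\<dots> = (\<Sum>\<theta>\<in>Sset m i t. wt m i \<theta> * EU Act (\<pi> i) (b (\<theta>(i := t'))))"
    unfolding wt_def by (intro sum.cong refl arg_cong2[where f="(*)"] prod.cong) auto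
  finally show ?thesis .
qed

lemma avg_fit_diff:
  "avg_fit Act \<pi> m b i t' - avg_fit Act \<pi> m b i t =
    (\<Sum>\<theta>\<in>Sset m i t. wt m i \<theta> * (EU Act (\<pi> i) (b (\<theta>(i := t'))) - EU Act (\<pi> i) (b \<theta>)))"
proof -
  have e: "avg_fit Act \<pi> m b i t = (\<Sum>\<theta>\<in>Sset m i t. wt m i \<theta> * EU Act (\<pi> i) (b \<theta>))"
    unfolding avg_fit_def Sset_def wt_def by simp
  show ?thesis unfolding avg_fit_reindex[of Act \<pi> m b i t' t] e
    by (simp add: sum_subtractf right_diff_distrib)
qed

lemma finite_Sset:
  fixes m :: "'p::finite \<Rightarrow> 't \<Rightarrow> real"
  assumes "\<forall>k. finite (supp (m k))"
  shows "finite (Sset m i t)"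
proof -
  have "Sset m i t \<subseteq> PiE UNIV (\<lambda>k. insert t (supp (m k)))"
    unfolding Sset_def PiE_UNIV_domain by auto
  moreover have "finite (PiE UNIV (\<lambda>k. insert t (supp (m k))))"
    using assms by (intro finite_PiE) auto
  ultimately show ?thesis by (rule finite_subset)
qed


lemma post_nonneg:
  assumes td: "type_dist Act \<mu>" and e: "\<forall>j\<in>J. 0 < eps j \<and> eps j < 1"
  shows "0 \<le> post_entry \<mu> J mt eps k x"
proof -
  have "0 \<le> \<mu> k x" using td unfolding type_dist_def by blast
  show ?thesis
  proof (cases "k \<in> J")
    case True
    hence "0 \<le> 1 - eps k" "0 \<le> eps k" using e by auto
    hence "0 \<le> (1 - eps k) * \<mu> k x" "0 \<le> eps k * (if x = mt k then 1 else 0)"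
      using \<open>0 \<le> \<mu> k x\<close> by simp_all
    thus ?thesis using True unfolding post_entry_def by simp
  next
    case False thus ?thesis using \<open>0 \<le> \<mu> k x\<close> unfolding post_entry_def by simp
  qed
qed

lemma post_supp:
  assumes td: "type_dist Act \<mu>" and e: "\<forall>j\<in>J. 0 < eps j \<and> eps j < 1"
    and mt: "\<forall>j\<in>J. mt j \<notin> supp (\<mu> j)"
  shows "supp (post_entry \<mu> J mt eps k) = (if k \<in> J then insert (mt k) (supp (\<mu> k)) else supp (\<mu> k))"
proof (cases "k \<in> J")
  case False thus ?thesis unfolding post_entry_def supp_def by simp
next
  case True
  have "x \<in> supp (post_entry \<mu> J mt eps k) \<longleftrightarrow> x \<in> insert (mt k) (supp (\<mu> k))" for x
  proof (cases "x = mt k")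
    case True
    hence "\<mu> k x = 0" using mt \<open>k \<in> J\<close> unfolding supp_def by auto
    thus ?thesis using True \<open>k \<in> J\<close> e unfolding post_entry_def supp_def by auto
  next
    case False
    thus ?thesis using \<open>k \<in> J\<close> e unfolding post_entry_def supp_def by auto
  qed
  thus ?thesis using True by auto
qed

lemma wt_pos:
  fixes m :: "'p::finite \<Rightarrow> 't \<Rightarrow> real"
  assumes "\<forall>k x. 0 \<le> m k x" and "\<theta> \<in> Sset m i t"
  shows "0 < wt m i \<theta>"
  unfolding wt_def
proof (rule prod_pos)
  fix j assume "j \<in> UNIV - {i}"
  hence "\<theta> j \<in> supp (m j)" using assms(2) unfolding Sset_def by auto
  hence "m j (\<theta> j) \<noteq> 0" unfolding supp_def by simp
  moreover have "0 \<le> m j (\<theta> j)" using assms(1) by blast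
  ultimately show "0 < m j (\<theta> j)" by linarith
qed

lemma wt_nonneg:
  fixes m :: "'p::finite \<Rightarrow> 't \<Rightarrow> real"
  assumes "\<forall>k x. 0 \<le> m k x"
  shows "0 \<le> wt m i \<theta>"
  unfolding wt_def using assms by (intro prod_nonneg) auto

lemma sum_zero_pointwise:
  fixes w D :: "'b \<Rightarrow> real"
  assumes "finite S" "\<forall>x\<in>S. 0 \<le> w x" "\<forall>x\<in>S. 0 \<le> D x" "(\<Sum>x\<in>S. w x * D x) = 0"
    "x \<in> S" "0 < w x"
  shows "D x = 0"
proof -
  have "w x * D x = 0" using assms(1-5) sum_nonneg_eq_0_iff[of S "\<lambda>x. w x * D x"] by auto
  thus ?thesis using assms(6) by simp
qed

lemma sum_nonneg_prod:
  fixes w D :: "'b \<Rightarrow> real"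
  assumes "\<forall>x\<in>S. 0 \<le> w x" "\<forall>x\<in>S. 0 \<le> D x"
  shows "0 \<le> (\<Sum>x\<in>S. w x * D x)"
  using assms by (intro sum_nonneg) auto

lemma exists_max:
  fixes f :: "'b \<Rightarrow> real"
  assumes "finite F" "F \<noteq> {}"
  shows "\<exists>x. x \<in> F \<and> (\<forall>y\<in>F. f y \<le> f x)"
proof -
  have "Max (f ` F) \<in> f ` F" using assms by simp
  then obtain x where "x \<in> F" "f x = Max (f ` F)" by auto
  thus ?thesis using assms by auto
qed

lemma td_facts:
  assumes "type_dist Act \<mu>"
  shows "finite (supp (\<mu> i))" "supp (\<mu> i) \<noteq> {}" "\<forall>x. 0 \<le> \<mu> i x"
proof -
  show "finite (supp (\<mu> i))" "\<forall>x. 0 \<le> \<mu> i x" using assms unfolding type_dist_def by blast+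
  show "supp (\<mu> i) \<noteq> {}"
  proof
    assume "supp (\<mu> i) = {}"
    moreover have "sum (\<mu> i) (supp (\<mu> i)) = 1" using assms unfolding type_dist_def by blast
    ultimately show False by simp
  qed
qed


lemma stepA:
  fixes Act :: "'p::finite \<Rightarrow> 'a set"
    and \<pi> :: "'p \<Rightarrow> ('p \<Rightarrow> 'a) \<Rightarrow> real"
    and \<mu> :: "'p \<Rightarrow> (('p \<Rightarrow> 'a) \<Rightarrow> real) \<Rightarrow> real"
    and b :: "('p \<Rightarrow> ('p \<Rightarrow> 'a) \<Rightarrow> real) \<Rightarrow> 'p \<Rightarrow> 'a \<Rightarrow> real"
  assumes fin: "\<forall>i. finite (Act i) \<and> Act i \<noteq> {}"
    and td: "type_dist Act \<mu>"
    and bB: "b \<in> B1 Act \<mu>"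
    and st: "stable Act \<pi> \<mu> b"
    and th0: "\<theta>0 \<in> supp_prof \<mu>" and t: "t \<in> supp (\<mu> j)"
  shows "EU Act (\<pi> j) (b (\<theta>0(j := t))) \<le> EU Act (\<pi> j) (b \<theta>0)"
proof -
  have finA: "\<forall>i. finite (Act i)" and neA: "\<forall>i. Act i \<noteq> {}" using fin by auto
  obtain c where mc: "ind Act c \<notin> supp (\<mu> j)"
    using exists_mutant[OF neA td_facts(1)[OF td]] by blast
  define m where "m = ind Act c"
  define mt where "mt = (\<lambda>_::'p. m)"
  have "\<forall>J mt. J \<noteq> {} \<longrightarrow> (\<forall>j\<in>J. mt j \<in> Theta Act - supp (\<mu> j)) \<longrightarrow>
       (\<exists>eb. 0 < eb \<and> eb < 1 \<and>
          (\<forall>eps. (\<forall>j\<in>J. 0 < eps j \<and> eps j < 1 \<and> eps j < eb) \<longrightarrow>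
             (\<forall>b'\<in>B1_focal Act (post_entry \<mu> J mt eps) \<mu> b.
                (\<exists>j\<in>J. \<forall>t\<in>supp (\<mu> j).
                   avg_fit Act \<pi> (post_entry \<mu> J mt eps) b' j t >
                   avg_fit Act \<pi> (post_entry \<mu> J mt eps) b' j (mt j))
                \<or> balanced Act \<pi> (post_entry \<mu> J mt eps) b')))"
    using st unfolding stable_def by blast
  from this[rule_format, of "{j}" mt]
  obtain eb where eb: "0 < eb" "eb < 1" and
    H: "\<And>eps. (\<forall>j\<in>{j}. 0 < eps j \<and> eps j < 1 \<and> eps j < eb) \<Longrightarrow>
             (\<forall>b'\<in>B1_focal Act (post_entry \<mu> {j} mt eps) \<mu> b.
                (\<exists>j\<in>{j}. \<forall>t\<in>supp (\<mu> j).
                   avg_fit Act \<pi> (post_entry \<mu> {j} mt eps) b' j t >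
                   avg_fit Act \<pi> (post_entry \<mu> {j} mt eps) b' j (mt j))
                \<or> balanced Act \<pi> (post_entry \<mu> {j} mt eps) b')"
    using mc ind_Theta unfolding mt_def m_def by auto
  define eps where "eps = (\<lambda>_::'p. eb / 2)"
  have epsJ: "\<forall>j\<in>{j}. 0 < eps j \<and> eps j < 1" and epsJ': "\<forall>j\<in>{j}. 0 < eps j \<and> eps j < 1 \<and> eps j < eb"
    using eb unfolding eps_def by auto
  define \<mu>' where "\<mu>' = post_entry \<mu> {j} mt eps"
  have mtJ: "\<forall>k\<in>{j}. mt k \<notin> supp (\<mu> k)" using mc unfolding mt_def m_def by simp
  have supp': "\<And>k. supp (\<mu>' k) = (if k = j then insert m (supp (\<mu> k)) else supp (\<mu> k))"
    unfolding \<mu>'_def using post_supp[OF td epsJ mtJ] unfolding mt_def by simp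
  have nn': "\<forall>k x. 0 \<le> \<mu>' k x" unfolding \<mu>'_def using post_nonneg[OF td epsJ] by blast
  have fin': "\<forall>k. finite (supp (\<mu>' k))" using supp' td_facts(1)[OF td] by simp
  define F where "F = supp (\<mu> j)"
  have finF: "finite F" "F \<noteq> {}" unfolding F_def using td_facts[OF td] by auto
  define f where "f = (\<lambda>\<theta> t'. EU Act (\<pi> j) (b (\<theta>(j := t'))))"
  define g where "g = (\<lambda>\<theta>. SOME t'. t' \<in> F \<and> (\<forall>t''\<in>F. f \<theta> t'' \<le> f \<theta> t'))"
  have gp: "g \<theta> \<in> F \<and> (\<forall>t''\<in>F. f \<theta> t'' \<le> f \<theta> (g \<theta>))" for \<theta>
    using someI_ex[OF exists_max[OF finF, of "f \<theta>"]] unfolding g_def .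
  define b' where "b' = (\<lambda>\<theta>. if \<theta> j = m then b (\<theta>(j := g \<theta>)) else b \<theta>)"
  have mnot: "m \<notin> supp (\<mu> j)" using mc unfolding m_def .
  have focal: "b' \<in> B1_focal Act \<mu>' \<mu> b"
    unfolding B1_focal_def B1_def
  proof (intro CollectI conjI ballI)
    fix \<theta> assume th: "\<theta> \<in> supp_prof \<mu>'"
    show "is_NE Act \<theta> (b' \<theta>)"
    proof (cases "\<theta> j = m")
      case True
      have "\<theta>(j := g \<theta>) \<in> supp_prof \<mu>" using th gp[of \<theta>] supp' unfolding supp_prof_def F_def
        by (auto split: if_splits)
      hence "is_NE Act (\<theta>(j := g \<theta>)) (b (\<theta>(j := g \<theta>)))" using bB unfolding B1_def by blast
      moreover have "\<forall>k. \<theta> k \<noteq> (\<theta>(j := g \<theta>)) k \<longrightarrow> (\<exists>c. \<theta> k = ind Act c)"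
        using True unfolding m_def by auto
      ultimately show ?thesis using NE_ind[OF finA] True unfolding b'_def by simp
    next
      case False
      have "\<theta> \<in> supp_prof \<mu>"
        unfolding supp_prof_def
      proof (intro CollectI allI)
        fix k
        have "\<theta> k \<in> supp (\<mu>' k)" using th unfolding supp_prof_def by blast
        thus "\<theta> k \<in> supp (\<mu> k)" using False by (cases "k = j") (simp_all add: supp')
      qed
      thus ?thesis using bB False unfolding B1_def b'_def by simp
    qed
  next
    fix \<theta> assume "\<theta> \<in> supp_prof \<mu>"
    hence "\<theta> j \<noteq> m" using mnot unfolding supp_prof_def by auto
    thus "b' \<theta> = b \<theta>" unfolding b'_def by simp
  qed
  have diffeq: "avg_fit Act \<pi> \<mu>' b' j m - avg_fit Act \<pi> \<mu>' b' j t1 =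
      (\<Sum>\<theta>\<in>Sset \<mu>' j t1. wt \<mu>' j \<theta> * (f (\<theta>(j := m)) (g (\<theta>(j := m))) - f (\<theta>(j := m)) t1))"
    if t1: "t1 \<in> supp (\<mu> j)" for t1
    unfolding avg_fit_diff
  proof (intro sum.cong refl arg_cong2[where f="(*)"])
    fix \<theta> assume "\<theta> \<in> Sset \<mu>' j t1"
    hence "\<theta> j = t1" unfolding Sset_def by simp
    hence "\<theta> j \<noteq> m" using t1 mnot by auto
    thus "EU Act (\<pi> j) (b' (\<theta>(j := m))) - EU Act (\<pi> j) (b' \<theta>) =
        f (\<theta>(j := m)) (g (\<theta>(j := m))) - f (\<theta>(j := m)) t1"
      unfolding b'_def f_def using \<open>\<theta> j = t1\<close> by (simp add: fun_upd_idem)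
  qed
  have Dnn: "0 \<le> f (\<theta>(j := m)) (g (\<theta>(j := m))) - f (\<theta>(j := m)) t1" if "t1 \<in> supp (\<mu> j)" for \<theta> t1
    using gp[of "\<theta>(j := m)"] that unfolding F_def by auto
  have ge: "avg_fit Act \<pi> \<mu>' b' j t1 \<le> avg_fit Act \<pi> \<mu>' b' j m" if "t1 \<in> supp (\<mu> j)" for t1
  proof -
    have "0 \<le> (\<Sum>\<theta>\<in>Sset \<mu>' j t1. wt \<mu>' j \<theta> * (f (\<theta>(j := m)) (g (\<theta>(j := m))) - f (\<theta>(j := m)) t1))"
      by (rule sum_nonneg_prod) (use wt_nonneg[OF nn'] Dnn[OF that] in auto)
    thus ?thesis using diffeq[OF that] by linarith
  qed
  have "balanced Act \<pi> \<mu>' b'"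
    using H[OF epsJ', rule_format, OF focal[unfolded \<mu>'_def]] ge t unfolding \<mu>'_def mt_def
    by (auto simp: not_less[symmetric])
  hence bal: "avg_fit Act \<pi> \<mu>' b' j m = avg_fit Act \<pi> \<mu>' b' j (\<theta>0 j)"
    unfolding balanced_def using supp' th0 unfolding supp_prof_def by auto
  have t0: "\<theta>0 j \<in> supp (\<mu> j)" using th0 unfolding supp_prof_def by auto
  have inS: "\<theta>0 \<in> Sset \<mu>' j (\<theta>0 j)" using th0 supp' unfolding Sset_def supp_prof_def by auto
  have "f (\<theta>0(j := m)) (g (\<theta>0(j := m))) - f (\<theta>0(j := m)) (\<theta>0 j) = 0"
    using sum_zero_pointwise[where w="wt \<mu>' j" and D="\<lambda>\<theta>. f (\<theta>(j := m)) (g (\<theta>(j := m))) - f (\<theta>(j := m)) (\<theta>0 j)",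
        OF finite_Sset[OF fin'] _ _ _ inS wt_pos[OF nn' inS]]
      wt_nonneg[OF nn'] Dnn[OF t0] diffeq[OF t0] bal by auto
  moreover have "f (\<theta>0(j := m)) t \<le> f (\<theta>0(j := m)) (g (\<theta>0(j := m)))"
    using gp[of "\<theta>0(j := m)"] t unfolding F_def by auto
  ultimately show ?thesis unfolding f_def by simp
qed


lemma stepA_eq:
  fixes Act :: "'p::finite \<Rightarrow> 'a set"
    and \<pi> :: "'p \<Rightarrow> ('p \<Rightarrow> 'a) \<Rightarrow> real"
    and \<mu> :: "'p \<Rightarrow> (('p \<Rightarrow> 'a) \<Rightarrow> real) \<Rightarrow> real"
    and b :: "('p \<Rightarrow> ('p \<Rightarrow> 'a) \<Rightarrow> real) \<Rightarrow> 'p \<Rightarrow> 'a \<Rightarrow> real"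
  assumes fin: "\<forall>i. finite (Act i) \<and> Act i \<noteq> {}"
    and td: "type_dist Act \<mu>"
    and bB: "b \<in> B1 Act \<mu>"
    and st: "stable Act \<pi> \<mu> b"
    and th0: "\<theta>0 \<in> supp_prof \<mu>" and t: "t \<in> supp (\<mu> j)"
  shows "EU Act (\<pi> j) (b (\<theta>0(j := t))) = EU Act (\<pi> j) (b \<theta>0)"
proof -
  have 1: "\<theta>0(j := t) \<in> supp_prof \<mu>" using th0 t unfolding supp_prof_def by auto
  have 2: "\<theta>0 j \<in> supp (\<mu> j)" using th0 unfolding supp_prof_def by auto
  show ?thesis using stepA[OF fin td bB st th0 t] stepA[OF fin td bB st 1 2] by simp
qed

lemma stepB:
  fixes Act :: "'p::finite \<Rightarrow> 'a set"
    and \<pi> :: "'p \<Rightarrow> ('p \<Rightarrow> 'a) \<Rightarrow> real"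
    and \<mu> :: "'p \<Rightarrow> (('p \<Rightarrow> 'a) \<Rightarrow> real) \<Rightarrow> real"
    and b :: "('p \<Rightarrow> ('p \<Rightarrow> 'a) \<Rightarrow> real) \<Rightarrow> 'p \<Rightarrow> 'a \<Rightarrow> real"
  assumes fin: "\<forall>i. finite (Act i) \<and> Act i \<noteq> {}"
    and td: "type_dist Act \<mu>"
    and bB: "b \<in> B1 Act \<mu>"
    and st: "stable Act \<pi> \<mu> b"
    and th0: "\<theta>0 \<in> supp_prof \<mu>" and t: "t \<in> supp (\<mu> j)" and ij: "i \<noteq> j"
  shows "EU Act (\<pi> i) (b \<theta>0) \<le> EU Act (\<pi> i) (b (\<theta>0(j := t)))"
proof -
  have finA: "\<forall>i. finite (Act i)" and neA: "\<forall>i. Act i \<noteq> {}" using fin by auto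
  obtain ci where mci: "ind Act ci \<notin> supp (\<mu> i)"
    using exists_mutant[OF neA td_facts(1)[OF td]] by blast
  obtain cj where mcj: "ind Act cj \<notin> supp (\<mu> j)"
    using exists_mutant[OF neA td_facts(1)[OF td]] by blast
  define mi where "mi = ind Act ci"
  define mj where "mj = ind Act cj"
  define mt where "mt = (\<lambda>k::'p. if k = i then mi else mj)"
  have mti: "mt i = mi" and mtj: "mt j = mj" using ij unfolding mt_def by auto
  have "\<forall>J mt. J \<noteq> {} \<longrightarrow> (\<forall>j\<in>J. mt j \<in> Theta Act - supp (\<mu> j)) \<longrightarrow>
       (\<exists>eb. 0 < eb \<and> eb < 1 \<and>
          (\<forall>eps. (\<forall>j\<in>J. 0 < eps j \<and> eps j < 1 \<and> eps j < eb) \<longrightarrow>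
             (\<forall>b'\<in>B1_focal Act (post_entry \<mu> J mt eps) \<mu> b.
                (\<exists>j\<in>J. \<forall>t\<in>supp (\<mu> j).
                   avg_fit Act \<pi> (post_entry \<mu> J mt eps) b' j t >
                   avg_fit Act \<pi> (post_entry \<mu> J mt eps) b' j (mt j))
                \<or> balanced Act \<pi> (post_entry \<mu> J mt eps) b')))"
    using st unfolding stable_def by blast
  note A = this[THEN spec[where x="{i, j}"], THEN spec[where x=mt]]
  have prem: "\<forall>k\<in>{i, j}. mt k \<in> Theta Act - supp (\<mu> k)"
    using mci mcj ind_Theta mti mtj unfolding mi_def mj_def by auto
  note B = mp[OF mp[OF A insert_not_empty] prem]
  obtain eb where EB: "0 < eb \<and> eb < 1 \<and>
          (\<forall>eps. (\<forall>k\<in>{i, j}. 0 < eps k \<and> eps k < 1 \<and> eps k < eb) \<longrightarrow>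
             (\<forall>b'\<in>B1_focal Act (post_entry \<mu> {i, j} mt eps) \<mu> b.
                (\<exists>k\<in>{i, j}. \<forall>t\<in>supp (\<mu> k).
                   avg_fit Act \<pi> (post_entry \<mu> {i, j} mt eps) b' k t >
                   avg_fit Act \<pi> (post_entry \<mu> {i, j} mt eps) b' k (mt k))
                \<or> balanced Act \<pi> (post_entry \<mu> {i, j} mt eps) b'))"
    using B by (rule exE)
  have eb: "0 < eb" "eb < 1" using EB by simp_all
  note Hall = conjunct2[OF conjunct2[OF EB]]
  define eps where "eps = (\<lambda>_::'p. eb / 2)"
  have epsJ: "\<forall>k\<in>{i, j}. 0 < eps k \<and> eps k < 1" and epsJ': "\<forall>k\<in>{i, j}. 0 < eps k \<and> eps k < 1 \<and> eps k < eb"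
    using eb unfolding eps_def by auto
  define \<mu>' where "\<mu>' = post_entry \<mu> {i, j} mt eps"
  have mtJ: "\<forall>k\<in>{i, j}. mt k \<notin> supp (\<mu> k)" using mci mcj mti mtj unfolding mi_def mj_def by auto
  have supp': "\<And>k. supp (\<mu>' k) = (if k = i then insert mi (supp (\<mu> k))
      else if k = j then insert mj (supp (\<mu> k)) else supp (\<mu> k))"
    unfolding \<mu>'_def using post_supp[OF td epsJ mtJ] mti mtj by auto
  have nn': "\<forall>k x. 0 \<le> \<mu>' k x" unfolding \<mu>'_def using post_nonneg[OF td epsJ] by blast
  have fin': "\<forall>k. finite (supp (\<mu>' k))" using supp' td_facts(1)[OF td] by simp
  have mni: "mi \<notin> supp (\<mu> i)" using mci unfolding mi_def .
  have mnj: "mj \<notin> supp (\<mu> j)" using mcj unfolding mj_def .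
  define s where "s = \<theta>0 i"
  have s: "s \<in> supp (\<mu> i)" using th0 unfolding s_def supp_prof_def by auto
  define F where "F = supp (\<mu> j)"
  have finF: "finite F" "F \<noteq> {}" unfolding F_def using td_facts[OF td] by auto
  define f where "f = (\<lambda>\<theta> t'. EU Act (\<pi> i) (b (\<theta>(i := s, j := t'))))"
  define g where "g = (\<lambda>\<theta>. SOME t'. t' \<in> F \<and> (\<forall>t''\<in>F. f \<theta> t'' \<le> f \<theta> t'))"
  have gp: "g \<theta> \<in> F \<and> (\<forall>t''\<in>F. f \<theta> t'' \<le> f \<theta> (g \<theta>))" for \<theta>
    using someI_ex[OF exists_max[OF finF, of "f \<theta>"]] unfolding g_def .
  define b' where "b' = (\<lambda>\<theta>. if \<theta> i = mi \<and> \<theta> j = mj then b (\<theta>(i := s, j := g \<theta>))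
        else if \<theta> i = mi then b (\<theta>(i := s))
        else if \<theta> j = mj then b (\<theta>(j := t))
        else b \<theta>)"
  have focal: "b' \<in> B1_focal Act \<mu>' \<mu> b"
    unfolding B1_focal_def B1_def
  proof (intro CollectI conjI ballI)
    fix \<theta> assume th: "\<theta> \<in> supp_prof \<mu>'"
    have thk: "\<theta> k \<in> supp (\<mu>' k)" for k using th unfolding supp_prof_def by auto
    define \<theta>1 where "\<theta>1 = (if \<theta> i = mi \<and> \<theta> j = mj then \<theta>(i := s, j := g \<theta>)
        else if \<theta> i = mi then \<theta>(i := s)
        else if \<theta> j = mj then \<theta>(j := t)
        else \<theta>)"
    have b'eq: "b' \<theta> = b \<theta>1" unfolding b'_def \<theta>1_def by simp
    have "\<theta>1 \<in> supp_prof \<mu>"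
      unfolding supp_prof_def
    proof (intro CollectI allI)
      fix k
      show "\<theta>1 k \<in> supp (\<mu> k)"
        using thk[of k] gp[of \<theta>] s t ij supp'[of k] unfolding \<theta>1_def F_def
        by (auto split: if_splits)
    qed
    hence "is_NE Act \<theta>1 (b \<theta>1)" using bB unfolding B1_def by blast
    moreover have "\<forall>k. \<theta> k \<noteq> \<theta>1 k \<longrightarrow> (\<exists>c. \<theta> k = ind Act c)"
      unfolding \<theta>1_def mi_def mj_def by auto
    ultimately show "is_NE Act \<theta> (b' \<theta>)" using NE_ind[OF finA] b'eq by simp
  next
    fix \<theta> assume "\<theta> \<in> supp_prof \<mu>"
    hence "\<theta> j \<noteq> mj" "\<theta> i \<noteq> mi" using mni mnj unfolding supp_prof_def by auto
    thus "b' \<theta> = b \<theta>" unfolding b'_def by simp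
  qed
  define D where "D = (\<lambda>\<theta>. if \<theta> j = mj then f (\<theta>(i := mi)) (g (\<theta>(i := mi))) - f (\<theta>(i := mi)) t else 0)"
  have diffi: "avg_fit Act \<pi> \<mu>' b' i mi - avg_fit Act \<pi> \<mu>' b' i s =
      (\<Sum>\<theta>\<in>Sset \<mu>' i s. wt \<mu>' i \<theta> * D \<theta>)"
    unfolding avg_fit_diff
  proof (intro sum.cong refl arg_cong2[where f="(*)"])
    fix \<theta> assume "\<theta> \<in> Sset \<mu>' i s"
    hence "\<theta> i = s" unfolding Sset_def by simp
    hence ne: "\<theta> i \<noteq> mi" using s mni by auto
    have e1: "\<theta>(i := mi, i := s, j := x) = \<theta>(j := x)" for x using \<open>\<theta> i = s\<close> by auto
    have e2: "\<theta>(i := s) = \<theta>" using \<open>\<theta> i = s\<close> by auto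
    show "EU Act (\<pi> i) (b' (\<theta>(i := mi))) - EU Act (\<pi> i) (b' \<theta>) = D \<theta>"
      unfolding b'_def D_def f_def using ne ij e1 e2 by auto
  qed
  have Dnn: "0 \<le> D \<theta>" for \<theta>
    using gp[of "\<theta>(i := mi)"] t unfolding D_def F_def by auto
  have gei: "avg_fit Act \<pi> \<mu>' b' i s \<le> avg_fit Act \<pi> \<mu>' b' i mi"
  proof -
    have "0 \<le> (\<Sum>\<theta>\<in>Sset \<mu>' i s. wt \<mu>' i \<theta> * D \<theta>)"
      by (rule sum_nonneg_prod) (use wt_nonneg[OF nn'] Dnn in auto)
    thus ?thesis using diffi by linarith
  qed
  have diffj: "avg_fit Act \<pi> \<mu>' b' j mj - avg_fit Act \<pi> \<mu>' b' j t =
      (\<Sum>\<theta>\<in>Sset \<mu>' j t. wt \<mu>' j \<theta> * 0)"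
    unfolding avg_fit_diff
  proof (intro sum.cong refl arg_cong2[where f="(*)"])
    fix \<theta> assume th: "\<theta> \<in> Sset \<mu>' j t"
    hence "\<theta> j = t" unfolding Sset_def by simp
    hence ne: "\<theta> j \<noteq> mj" using t mnj by auto
    have e2: "\<theta>(j := t) = \<theta>" using \<open>\<theta> j = t\<close> by auto
    show "EU Act (\<pi> j) (b' (\<theta>(j := mj))) - EU Act (\<pi> j) (b' \<theta>) = 0"
    proof (cases "\<theta> i = mi")
      case True
      have ins: "\<theta>(i := s) \<in> supp_prof \<mu>"
        unfolding supp_prof_def
      proof (intro CollectI allI)
        fix k
        show "(\<theta>(i := s)) k \<in> supp (\<mu> k)"
        proof (cases "k = i")
          case True thus ?thesis using s by simp
        next
          case False
          hence "\<theta> k \<in> supp (\<mu>' k)" using th t \<open>\<theta> j = t\<close> unfolding Sset_def by (cases "k = j") (auto simp: supp')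
          thus ?thesis using False ne \<open>\<theta> j = t\<close> t by (auto simp: supp' split: if_splits)
        qed
      qed
      have "g (\<theta>(j := mj)) \<in> supp (\<mu> j)" using gp unfolding F_def by blast
      from stepA_eq[OF fin td bB st ins this]
      have "EU Act (\<pi> j) (b (\<theta>(i := s, j := g (\<theta>(j := mj))))) = EU Act (\<pi> j) (b (\<theta>(i := s)))" .
      thus ?thesis unfolding b'_def using True ne ij
        by (simp add: fun_upd_twist[OF ij])
    next
      case False
      thus ?thesis unfolding b'_def using ne ij e2 by simp
    qed
  qed
  have notj: "\<not> avg_fit Act \<pi> \<mu>' b' j t > avg_fit Act \<pi> \<mu>' b' j mj" using diffj by simp
  have noti: "\<not> avg_fit Act \<pi> \<mu>' b' i s > avg_fit Act \<pi> \<mu>' b' i mi" using gei by simp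
  have Dis: "(\<exists>k\<in>{i, j}. \<forall>t'\<in>supp (\<mu> k).
                   avg_fit Act \<pi> \<mu>' b' k t' > avg_fit Act \<pi> \<mu>' b' k (mt k))
                \<or> balanced Act \<pi> \<mu>' b'"
    using bspec[OF mp[OF spec[OF Hall, of eps] epsJ'] focal[unfolded \<mu>'_def]] unfolding \<mu>'_def .
  have ni: "\<not> (\<forall>t'\<in>supp (\<mu> i). avg_fit Act \<pi> \<mu>' b' i t' > avg_fit Act \<pi> \<mu>' b' i (mt i))"
    using noti s mti by auto
  have nj: "\<not> (\<forall>t'\<in>supp (\<mu> j). avg_fit Act \<pi> \<mu>' b' j t' > avg_fit Act \<pi> \<mu>' b' j (mt j))"
    using notj t mtj by auto
  have "balanced Act \<pi> \<mu>' b'" using Dis ni nj by blast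
  hence bal: "avg_fit Act \<pi> \<mu>' b' i mi = avg_fit Act \<pi> \<mu>' b' i s"
    unfolding balanced_def using supp' s by auto
  define \<theta>s where "\<theta>s = \<theta>0(j := mj)"
  have inS: "\<theta>s \<in> Sset \<mu>' i s"
    using th0 supp' ij unfolding Sset_def supp_prof_def \<theta>s_def s_def by auto
  have "D \<theta>s = 0"
    using sum_zero_pointwise[where w="wt \<mu>' i" and D=D, OF finite_Sset[OF fin'] _ _ _ inS wt_pos[OF nn' inS]]
      wt_nonneg[OF nn'] Dnn diffi bal by auto
  hence eq: "f (\<theta>s(i := mi)) (g (\<theta>s(i := mi))) = f (\<theta>s(i := mi)) t"
    unfolding D_def \<theta>s_def by simp
  have t0: "\<theta>0 j \<in> F" using th0 unfolding F_def supp_prof_def by auto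
  have "f (\<theta>s(i := mi)) (\<theta>0 j) \<le> f (\<theta>s(i := mi)) (g (\<theta>s(i := mi)))"
    using gp[of "\<theta>s(i := mi)"] t0 by auto
  moreover have "\<theta>s(i := mi, i := s, j := x) = \<theta>0(j := x)" for x
    unfolding \<theta>s_def s_def by auto
  ultimately show ?thesis using eq unfolding f_def by simp
qed


lemma stepC:
  fixes Act :: "'p::finite \<Rightarrow> 'a set"
    and \<pi> :: "'p \<Rightarrow> ('p \<Rightarrow> 'a) \<Rightarrow> real"
    and \<mu> :: "'p \<Rightarrow> (('p \<Rightarrow> 'a) \<Rightarrow> real) \<Rightarrow> real"
    and b :: "('p \<Rightarrow> ('p \<Rightarrow> 'a) \<Rightarrow> real) \<Rightarrow> 'p \<Rightarrow> 'a \<Rightarrow> real"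
  assumes fin: "\<forall>i. finite (Act i) \<and> Act i \<noteq> {}"
    and td: "type_dist Act \<mu>"
    and bB: "b \<in> B1 Act \<mu>"
    and st: "stable Act \<pi> \<mu> b"
    and th0: "\<theta>0 \<in> supp_prof \<mu>" and t: "t \<in> supp (\<mu> j)"
  shows "EU Act (\<pi> i) (b (\<theta>0(j := t))) = EU Act (\<pi> i) (b \<theta>0)"
proof (cases "i = j")
  case True thus ?thesis using stepA_eq[OF fin td bB st th0 t] by simp
next
  case False
  have 1: "\<theta>0(j := t) \<in> supp_prof \<mu>" using th0 t unfolding supp_prof_def by auto
  have 2: "\<theta>0 j \<in> supp (\<mu> j)" using th0 unfolding supp_prof_def by auto
  show ?thesis using stepB[OF fin td bB st th0 t False] stepB[OF fin td bB st 1 2 False] by simp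
qed

theorem mainTheorem2:
  fixes Act :: "'p::finite \<Rightarrow> 'a set"
    and \<pi> :: "'p \<Rightarrow> ('p \<Rightarrow> 'a) \<Rightarrow> real"
    and \<mu> :: "'p \<Rightarrow> (('p \<Rightarrow> 'a) \<Rightarrow> real) \<Rightarrow> real"
    and b :: "('p \<Rightarrow> ('p \<Rightarrow> 'a) \<Rightarrow> real) \<Rightarrow> 'p \<Rightarrow> 'a \<Rightarrow> real"
  assumes "\<forall>i. finite (Act i) \<and> Act i \<noteq> {}"
    and "type_dist Act \<mu>"
    and "b \<in> B1 Act \<mu>"
    and "stable Act \<pi> \<mu> b"
    and "\<theta> \<in> supp_prof \<mu>" and "\<theta>' \<in> supp_prof \<mu>"
  shows "\<forall>i. EU Act (\<pi> i) (b \<theta>) = EU Act (\<pi> i) (b \<theta>')"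
proof
  fix i
  have "\<forall>\<theta>1\<in>supp_prof \<mu>. {k. \<theta>1 k \<noteq> \<theta>' k} \<subseteq> D \<longrightarrow> EU Act (\<pi> i) (b \<theta>1) = EU Act (\<pi> i) (b \<theta>')"
    if "finite D" for D
    using that
  proof (induction D rule: finite_induct)
    case empty
    show ?case
    proof (intro ballI impI)
      fix \<theta>1 assume "{k. \<theta>1 k \<noteq> \<theta>' k} \<subseteq> {}"
      hence "\<theta>1 = \<theta>'" by auto
      thus "EU Act (\<pi> i) (b \<theta>1) = EU Act (\<pi> i) (b \<theta>')" by simp
    qed
  next
    case (insert k D)
    show ?case
    proof (intro ballI impI)
      fix \<theta>1 assume th1: "\<theta>1 \<in> supp_prof \<mu>" and sub: "{k'. \<theta>1 k' \<noteq> \<theta>' k'} \<subseteq> insert k D"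
      have tk: "\<theta>' k \<in> supp (\<mu> k)" using assms(6) unfolding supp_prof_def by auto
      have in2: "\<theta>1(k := \<theta>' k) \<in> supp_prof \<mu>" using th1 tk unfolding supp_prof_def by auto
      have sub2: "{k'. (\<theta>1(k := \<theta>' k)) k' \<noteq> \<theta>' k'} \<subseteq> D" using sub by auto
      have "EU Act (\<pi> i) (b (\<theta>1(k := \<theta>' k))) = EU Act (\<pi> i) (b \<theta>1)"
        using stepC[OF assms(1-4) th1 tk] .
      moreover have "EU Act (\<pi> i) (b (\<theta>1(k := \<theta>' k))) = EU Act (\<pi> i) (b \<theta>')"
        using insert.IH in2 sub2 by blast
      ultimately show "EU Act (\<pi> i) (b \<theta>1) = EU Act (\<pi> i) (b \<theta>')" by simp
    qed
  qed
  from this[of UNIV] assms(5) show "EU Act (\<pi> i) (b \<theta>) = EU Act (\<pi> i) (b \<theta>')" by simp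
qed

end
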